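(* For every $n\ge2$, the set $\mathcal{MV}(n,2)$ has nonempty interior in $\mathbb R^{\binom{n+1}2}$; in particular its topological dimension is $\binom{n+1}2$. Consequently, the topological dimension of $\mathcal{PMV}(n,2)$ is $\binom n2$.
   Context: $\mathcal K_2$ denotes the set of nonempty compact convex subsets of $\mathbb R^2$. The mixed area of $K,L\in\mathcal K_2$ is $\mathrm V(K,L)=\tfrac12\big(\mathrm{Vol}_2(K+L)-\mathrm{Vol}_2(K)-\mathrm{Vol}_2(L)\big)$, so $\mathrm V(K,K)=\mathrm{Vol}_2(K)$. The mixed volume configuration space is $\mathcal{MV}(n,2)=\{(\mathrm V(K_i,K_j))_{1\le i\le j\le n}\in\mathbb R^{\binom{n+1}2}: K_1,\dots,K_n\in\mathcal K_2\}$, and $\mathcal{PMV}(n,2)=\{(\mathrm V(K_i,K_j))_{1\le i<j\le n}\in\mathbb R^{\binom n2}: K_1,\dots,K_n\in\mathcal K_2\}$. *)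

theory Defs
  imports "HOL-Analysis.Analysis"
begin

definition convex_body2 :: "(real^2) set \<Rightarrow> bool" where
  "convex_body2 K \<longleftrightarrow> K \<noteq> {} \<and> compact K \<and> convex K"

definition vol2 :: "(real^2) set \<Rightarrow> real" where
  "vol2 K = measure lebesgue K"

definition minkowski_sum :: "(real^2) set \<Rightarrow> (real^2) set \<Rightarrow> (real^2) set" where
  "minkowski_sum K L = {x + y | x y. x \<in> K \<and> y \<in> L}"

definition mixed_area :: "(real^2) set \<Rightarrow> (real^2) set \<Rightarrow> real" where
  "mixed_area K L = (vol2 (minkowski_sum K L) - vol2 K - vol2 L) / 2"

text \<open>Coordinates of R^N are realised as functions nat => real vanishing from N on
  (the topology Euclidean_space N). The pair (i,j), i <= j < n (0-based) is sent to the
  coordinate j(j+1)/2 + i, a bijection onto {0..<(n+1) choose 2}; the pair (i,j),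
  i < j < n, is sent to j(j-1)/2 + i, a bijection onto {0..<n choose 2}.\<close>
definition MV :: "nat \<Rightarrow> (nat \<Rightarrow> real) set" where
  "MV n = {x. \<exists>K :: nat \<Rightarrow> (real^2) set. (\<forall>i<n. convex_body2 (K i)) \<and>
      (\<forall>i j. i \<le> j \<and> j < n \<longrightarrow> x (j * (j + 1) div 2 + i) = mixed_area (K i) (K j)) \<and>
      (\<forall>k\<ge>(n + 1) choose 2. x k = 0)}"

definition PMV :: "nat \<Rightarrow> (nat \<Rightarrow> real) set" where
  "PMV n = {x. \<exists>K :: nat \<Rightarrow> (real^2) set. (\<forall>i<n. convex_body2 (K i)) \<and>
      (\<forall>i j. i < j \<and> j < n \<longrightarrow> x (j * (j - 1) div 2 + i) = mixed_area (K i) (K j)) \<and>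
      (\<forall>k\<ge>n choose 2. x k = 0)}"

end

theory Submission
  imports Defs "HOL-Homology.Homology"
begin


definition seg :: "real \<Rightarrow> real^2 \<Rightarrow> (real^2) set" where
  "seg a v = (\<lambda>t. t *\<^sub>R v) ` {0..a}"

lemma compact_seg: "compact (seg a v)"
  unfolding seg_def by (intro compact_continuous_image continuous_intros) auto

lemma convex_seg: "convex (seg a v)"
  unfolding seg_def by (intro convex_linear_image) (auto intro: linear_scaleR_left)

lemma mem_mink: "p \<in> minkowski_sum A B \<longleftrightarrow> (\<exists>x\<in>A. \<exists>y\<in>B. p = x + y)"
  unfolding minkowski_sum_def by auto

lemma compact_mink: "compact A \<Longrightarrow> compact B \<Longrightarrow> compact (minkowski_sum A B)"
  unfolding minkowski_sum_def by (rule compact_sums)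

lemma convex_mink: "convex A \<Longrightarrow> convex B \<Longrightarrow> convex (minkowski_sum A B)"
proof -
  assume "convex A" "convex B"
  have "minkowski_sum A B = (\<Union>x\<in> A. \<Union>y \<in> B. {x + y})" unfolding minkowski_sum_def by blast
  then show ?thesis using convex_sums[OF \<open>convex A\<close> \<open>convex B\<close>] by simp
qed

lemma mem_seg: "p \<in> seg a v \<longleftrightarrow> (\<exists>t. 0 \<le> t \<and> t \<le> a \<and> p = t *\<^sub>R v)"
  unfolding seg_def by auto

lemma seg_memI: "0 \<le> t \<Longrightarrow> t \<le> a \<Longrightarrow> t *\<^sub>R v \<in> seg a v"
  unfolding seg_def by auto

lemma mink_memI: "x \<in> A \<Longrightarrow> y \<in> B \<Longrightarrow> x + y \<in> minkowski_sum A B"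
  unfolding minkowski_sum_def by auto

lemma mink_segE:
  assumes "p \<in> minkowski_sum K (seg a v)"
  obtains k t where "k \<in> K" "0 \<le> t" "t \<le> a" "p = k + t *\<^sub>R v"
proof -
  obtain k y where "k \<in> K" "y \<in> seg a v" "p = k + y" using assms unfolding mem_mink by blast
  moreover obtain t where "0 \<le> t" "t \<le> a" "y = t *\<^sub>R v" using \<open>y \<in> seg a v\<close> unfolding mem_seg by blast
  ultimately show ?thesis using that by blast
qed

lemma union_step:
  fixes K :: "(real^2) set" and e :: "real^2"
  assumes "0 \<le> a" "0 \<le> b"
  shows "minkowski_sum K (seg (a+b) e) = minkowski_sum K (seg a e) \<union> (+) (a *\<^sub>R e) ` minkowski_sum K (seg b e)"
proof (intro Set.set_eqI iffI)
  fix p assume "p \<in> minkowski_sum K (seg (a+b) e)"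
  then obtain k t where k: "k \<in> K" "0 \<le> t" "t \<le> a + b" "p = k + t *\<^sub>R e"
    by (rule mink_segE)
  show "p \<in> minkowski_sum K (seg a e) \<union> (+) (a *\<^sub>R e) ` minkowski_sum K (seg b e)"
  proof (cases "t \<le> a")
    case True
    have "t *\<^sub>R e \<in> seg a e" using k True by (intro seg_memI) auto
    then have "p \<in> minkowski_sum K (seg a e)" using k by (metis mink_memI)
    then show ?thesis by blast
  next
    case False
    have "(t - a) *\<^sub>R e \<in> seg b e" using k False by (intro seg_memI) auto
    then have "k + (t - a) *\<^sub>R e \<in> minkowski_sum K (seg b e)"
      using k by (metis mink_memI)
    moreover have "p = a *\<^sub>R e + (k + (t - a) *\<^sub>R e)" using k by (simp add: algebra_simps)
    ultimately show ?thesis by blast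
  qed
next
  fix p assume "p \<in> minkowski_sum K (seg a e) \<union> (+) (a *\<^sub>R e) ` minkowski_sum K (seg b e)"
  then show "p \<in> minkowski_sum K (seg (a+b) e)"
  proof
    assume "p \<in> minkowski_sum K (seg a e)"
    then obtain k t where k: "k \<in> K" "0 \<le> t" "t \<le> a" "p = k + t *\<^sub>R e"
      by (rule mink_segE)
    have "t *\<^sub>R e \<in> seg (a+b) e" using k assms by (intro seg_memI) auto
    then show ?thesis using k by (metis mink_memI)
  next
    assume "p \<in> (+) (a *\<^sub>R e) ` minkowski_sum K (seg b e)"
    then obtain q where q: "q \<in> minkowski_sum K (seg b e)" "p = a *\<^sub>R e + q" by blast
    obtain k t where k0: "k \<in> K" "0 \<le> t" "t \<le> b" "q = k + t *\<^sub>R e"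
      using q(1) by (rule mink_segE)
    have k: "k \<in> K" "0 \<le> t" "t \<le> b" "p = a *\<^sub>R e + (k + t *\<^sub>R e)" using k0 q by auto
    then have "p = k + (a + t) *\<^sub>R e" by (simp add: algebra_simps)
    moreover have "(a + t) *\<^sub>R e \<in> seg (a+b) e" using k assms by (intro seg_memI) auto
    ultimately show ?thesis using k mink_memI by metis
  qed
qed

lemma inter_step:
  fixes K :: "(real^2) set" and e :: "real^2"
  assumes "0 \<le> a" "0 \<le> b" "convex K"
  shows "minkowski_sum K (seg a e) \<inter> (+) (a *\<^sub>R e) ` minkowski_sum K (seg b e) = (+) (a *\<^sub>R e) ` K"
proof (intro Set.set_eqI iffI)
  fix p assume "p \<in> minkowski_sum K (seg a e) \<inter> (+) (a *\<^sub>R e) ` minkowski_sum K (seg b e)"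
  then have p1: "p \<in> minkowski_sum K (seg a e)" and p2: "p \<in> (+) (a *\<^sub>R e) ` minkowski_sum K (seg b e)"
    by auto
  obtain k1 t1 where k1: "k1 \<in> K" "0 \<le> t1" "t1 \<le> a" "p = k1 + t1 *\<^sub>R e"
    using p1 by (rule mink_segE)
  obtain q where q: "q \<in> minkowski_sum K (seg b e)" "p = a *\<^sub>R e + q" using p2 by blast
  obtain k2 t2 where k2: "k2 \<in> K" "0 \<le> t2" "t2 \<le> b" "q = k2 + t2 *\<^sub>R e"
    using q(1) by (rule mink_segE)
  have k: "k1 \<in> K" "0 \<le> t1" "t1 \<le> a" "p = k1 + t1 *\<^sub>R e"
    "k2 \<in> K" "0 \<le> t2" "t2 \<le> b" "p = a *\<^sub>R e + (k2 + t2 *\<^sub>R e)" using k1 k2 q by auto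
  define d where "d = a + t2 - t1"
  have d: "t2 \<le> d" using k by (simp add: d_def)
  have k1: "k1 = k2 + d *\<^sub>R e" using k by (simp add: d_def algebra_simps)
  have "k2 + t2 *\<^sub>R e \<in> K"
  proof (cases "d = 0")
    case True then show ?thesis using d k by auto
  next
    case False
    then have dpos: "d > 0" using d k by auto
    have "k2 + t2 *\<^sub>R e = (1 - t2/d) *\<^sub>R k2 + (t2/d) *\<^sub>R k1"
      using dpos by (simp add: k1 algebra_simps)
    moreover have "(1 - t2/d) *\<^sub>R k2 + (t2/d) *\<^sub>R k1 \<in> K"
      using assms(3) k dpos d by (intro convexD) (auto simp: field_simps)
    ultimately show ?thesis by simp
  qed
  moreover have "p = a *\<^sub>R e + (k2 + t2 *\<^sub>R e)" using k by simp
  ultimately show "p \<in> (+) (a *\<^sub>R e) ` K" by blast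
next
  fix p assume "p \<in> (+) (a *\<^sub>R e) ` K"
  then obtain k where k: "k \<in> K" "p = a *\<^sub>R e + k" by auto
  have "a *\<^sub>R e \<in> seg a e" using assms by (intro seg_memI) auto
  then have "p \<in> minkowski_sum K (seg a e)" using k by (auto simp: mem_mink add.commute)
  moreover have "0 \<in> seg b e" using assms seg_memI[of 0 b e] by simp
  then have "k \<in> minkowski_sum K (seg b e)" using k by (force simp: mem_mink)
  then have "p \<in> (+) (a *\<^sub>R e) ` minkowski_sum K (seg b e)"
    using k by auto
  ultimately show "p \<in> minkowski_sum K (seg a e) \<inter> (+) (a *\<^sub>R e) ` minkowski_sum K (seg b e)" by blast
qed

lemma seg0: "seg 0 e = {0}" by (auto simp: seg_def)
lemma mink0: "minkowski_sum K {0} = K" by (auto simp: mem_mink)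

lemma additive_step:
  fixes K :: "(real^2) set" and e :: "real^2"
  assumes "0 \<le> a" "0 \<le> b" "convex K" "compact K"
  defines "f \<equiv> \<lambda>h. measure lebesgue (minkowski_sum K (seg h e))"
  shows "f (a+b) = f a + f b - f 0"
proof -
  have m1: "minkowski_sum K (seg a e) \<in> lmeasurable"
    by (intro lmeasurable_compact compact_mink compact_seg assms)
  have m2: "(+) (a *\<^sub>R e) ` minkowski_sum K (seg b e) \<in> lmeasurable"
    by (intro measurable_translation lmeasurable_compact compact_mink compact_seg assms)
  have "f (a+b) = measure lebesgue (minkowski_sum K (seg a e) \<union> (+) (a *\<^sub>R e) ` minkowski_sum K (seg b e))"
    unfolding f_def using union_step[OF assms(1,2)] by simp
  also have "\<dots> = f a + measure lebesgue ((+) (a *\<^sub>R e) ` minkowski_sum K (seg b e))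
      - measure lebesgue ((+) (a *\<^sub>R e) ` K)"
    using measure_Un3[OF m1 m2] inter_step[OF assms(1-3)] unfolding f_def by simp
  also have "\<dots> = f a + f b - f 0"
    unfolding f_def by (simp add: measure_translation seg0 mink0)
  finally show ?thesis .
qed


lemma measure_cbox2: assumes "u$1 \<le> v$1" "u$2 \<le> v$2"
  shows "measure lebesgue (cbox (u::real^2) v) = (v$1-u$1)*(v$2-u$2)"
proof -
  have ne: "cbox u v \<noteq> {}" using assms by (auto simp: mem_box_cart forall_2 intro!: exI[of _ u])
  have "measure lebesgue (cbox u v) = measure lborel (cbox u v)" by simp
  also have "\<dots> = (v$1-u$1)*(v$2-u$2)" using ne content_cbox_cart[of u v] by (simp add: UNIV_2)
  finally show ?thesis .
qed

lemma zero_by_arch: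
  fixes F C :: real
  assumes "\<And>m::nat. m \<ge> 1 \<Longrightarrow> real m * \<bar>F\<bar> \<le> C"
  shows "F = 0"
proof (rule ccontr)
  assume "F \<noteq> 0"
  then have d: "\<bar>F\<bar> > 0" by simp
  obtain m :: nat where m: "C / \<bar>F\<bar> < real m" using reals_Archimedean2 by blast
  define m' where "m' = max m 1"
  have "C / \<bar>F\<bar> < real m'" using m by (simp add: m'_def)
  then have "C < real m' * \<bar>F\<bar>" using d by (simp add: divide_less_eq)
  moreover have "real m' * \<bar>F\<bar> \<le> C" using assms[of m'] by (simp add: m'_def)
  ultimately show False by simp
qed

lemma vertical:
  fixes K :: "(real^2) set"
  assumes K: "compact K" "convex K" "K \<noteq> {}" and h: "0 \<le> h"
  shows "measure lebesgue (minkowski_sum K (seg h (axis 2 1))) =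
         measure lebesgue K + h * (Sup ((\<lambda>x. x$1) ` K) - Inf ((\<lambda>x. x$1) ` K))"
proof -
  define e :: "real^2" where "e = axis 2 1"
  have e1: "e$1 = 0" and e2: "e$2 = 1" by (simp_all add: e_def axis_def)
  define f where "f = (\<lambda>h. measure lebesgue (minkowski_sum K (seg h e)))"
  define a1 where "a1 = Inf ((\<lambda>x. x$1) ` K)"
  define b1 where "b1 = Sup ((\<lambda>x. x$1) ` K)"
  define a2 where "a2 = Inf ((\<lambda>x. x$2) ` K)"
  define b2 where "b2 = Sup ((\<lambda>x. x$2) ` K)"
  have cpt1: "compact ((\<lambda>x. x$1) ` K)" and cpt2: "compact ((\<lambda>x. x$2) ` K)"
    using K by (auto intro!: compact_continuous_image continuous_intros)
  have bd1: "bdd_above ((\<lambda>x. x$1) ` K)" "bdd_below ((\<lambda>x. x$1) ` K)"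
    using cpt1 by (auto intro: bounded_imp_bdd_above bounded_imp_bdd_below compact_imp_bounded)
  have bd2: "bdd_above ((\<lambda>x. x$2) ` K)" "bdd_below ((\<lambda>x. x$2) ` K)"
    using cpt2 by (auto intro: bounded_imp_bdd_above bounded_imp_bdd_below compact_imp_bounded)
  have kb: "a1 \<le> k$1" "k$1 \<le> b1" "a2 \<le> k$2" "k$2 \<le> b2" if "k \<in> K" for k
    using that bd1 bd2 unfolding a1_def b1_def a2_def b2_def
    by (auto intro!: cInf_lower cSup_upper)
  obtain k0 where k0: "k0 \<in> K" using K by auto
  have ab1: "a1 \<le> b1" using kb[OF k0] by simp
  have ab2: "a2 \<le> b2" using kb[OF k0] by simp
  have a1in: "a1 \<in> (\<lambda>x. x$1) ` K" unfolding a1_def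
    using cpt1 K(3) by (intro closed_contains_Inf compact_imp_closed bd1) auto
  have b1in: "b1 \<in> (\<lambda>x. x$1) ` K" unfolding b1_def
    using cpt1 K(3) by (intro closed_contains_Sup compact_imp_closed bd1) auto
  have cvx1: "convex ((\<lambda>x. x$1) ` K)"
    using K(2) by (intro convex_linear_image) (auto intro: bounded_linear.linear[OF bounded_linear_vec_nth])
  have proj: "\<exists>k\<in>K. k$1 = x" if "a1 \<le> x" "x \<le> b1" for x
  proof -
    have "closed_segment a1 b1 \<subseteq> (\<lambda>x. x$1) ` K"
      using cvx1 a1in b1in by (intro closed_segment_subset)
    then have "x \<in> (\<lambda>x. x$1) ` K" using that ab1 by (auto simp: closed_segment_eq_real_ivl)
    then show ?thesis by auto
  qed
  have meas: "minkowski_sum K (seg H e) \<in> lmeasurable" for H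
    by (intro lmeasurable_compact compact_mink compact_seg K)
  have f0: "f 0 = measure lebesgue K" by (simp add: f_def seg0 mink0)
  have mult: "f (real m * h) = f 0 + real m * (f h - f 0)" for m :: nat
  proof (induction m)
    case 0 then show ?case by simp
  next
    case (Suc m)
    have "f (real (Suc m) * h) = f (real m * h + h)" by (simp add: algebra_simps)
    also have "\<dots> = f (real m * h) + f h - f 0"
      unfolding f_def by (rule additive_step) (use h K in auto)
    finally show ?case using Suc by (simp add: algebra_simps)
  qed
  have upper: "f H \<le> (b1 - a1) * (b2 + H - a2)" if H: "0 \<le> H" for H
  proof -
    have sub: "minkowski_sum K (seg H e) \<subseteq> cbox (vector [a1, a2]) (vector [b1, b2 + H])"
    proof
      fix p assume "p \<in> minkowski_sum K (seg H e)"
      then obtain k t where kt: "k \<in> K" "0 \<le> t" "t \<le> H" "p = k + t *\<^sub>R e"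
        by (auto simp: mem_mink mem_seg)
      show "p \<in> cbox (vector [a1, a2]) (vector [b1, b2 + H])"
        using kt kb[OF kt(1)] by (simp add: mem_box_cart forall_2 e1 e2)
    qed
    have "f H \<le> measure lebesgue (cbox (vector [a1, a2]) (vector [b1, b2 + H]) :: (real^2) set)"
      unfolding f_def by (intro measure_mono_fmeasurable sub) (auto intro: meas[THEN fmeasurableD] meas)
    also have "\<dots> = (b1 - a1) * (b2 + H - a2)"
      using ab1 ab2 H by (subst measure_cbox2) auto
    finally show ?thesis .
  qed
  have lower: "(b1 - a1) * (H - (b2 - a2)) \<le> f H" if H: "0 \<le> H" for H
  proof (cases "H \<le> b2 - a2")
    case True
    then have "(b1 - a1) * (H - (b2 - a2)) \<le> 0" using ab1 by (simp add: mult_nonneg_nonpos)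
    also have "0 \<le> f H" by (simp add: f_def)
    finally show ?thesis .
  next
    case False
    have sub: "cbox (vector [a1, b2]) (vector [b1, a2 + H]) \<subseteq> minkowski_sum K (seg H e)"
    proof
      fix p :: "real^2" assume "p \<in> cbox (vector [a1, b2]) (vector [b1, a2 + H])"
      then have p: "a1 \<le> p$1" "p$1 \<le> b1" "b2 \<le> p$2" "p$2 \<le> a2 + H"
        by (auto simp: mem_box_cart forall_2)
      obtain k where k: "k \<in> K" "k$1 = p$1" using proj p by blast
      have "(p$2 - k$2) *\<^sub>R e \<in> seg H e"
        using kb[OF k(1)] p by (intro seg_memI) auto
      moreover have "p = k + (p$2 - k$2) *\<^sub>R e"
        using k by (simp add: vec_eq_iff forall_2 e1 e2)
      ultimately show "p \<in> minkowski_sum K (seg H e)" using k by (metis mink_memI)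
    qed
    have "(b1 - a1) * (H - (b2 - a2)) = measure lebesgue (cbox (vector [a1, b2]) (vector [b1, a2 + H]) :: (real^2) set)"
      using ab1 False by (subst measure_cbox2) (auto simp: algebra_simps)
    also have "\<dots> \<le> f H"
      unfolding f_def by (intro measure_mono_fmeasurable sub) (auto intro: meas[THEN fmeasurableD] meas)
    finally show ?thesis .
  qed
  have "f h - f 0 - (b1 - a1) * h = 0"
  proof (rule zero_by_arch[where C = "(b1 - a1) * (b2 - a2) + f 0"])
    fix m :: nat assume "m \<ge> 1"
    have H: "0 \<le> real m * h" using h by simp
    have u: "f 0 + real m * (f h - f 0) \<le> (b1 - a1) * (b2 + real m * h - a2)"
      using upper[OF H] mult[of m] by simp
    have l: "(b1 - a1) * (real m * h - (b2 - a2)) \<le> f 0 + real m * (f h - f 0)"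
      using lower[OF H] mult[of m] by simp
    have f0p: "0 \<le> f 0" by (simp add: f_def)
    have "real m * (f h - f 0 - (b1 - a1) * h) \<le> (b1 - a1) * (b2 - a2) + f 0"
      using u f0p by (simp add: algebra_simps)
    moreover have "- (real m * (f h - f 0 - (b1 - a1) * h)) \<le> (b1 - a1) * (b2 - a2) + f 0"
      using l f0p by (simp add: algebra_simps)
    ultimately show "real m * \<bar>f h - f 0 - (b1 - a1) * h\<bar> \<le> (b1 - a1) * (b2 - a2) + f 0"
      by (simp add: abs_if) (smt (verit) mult_minus_right)
  qed
  then show ?thesis
    using f0 unfolding f_def e_def a1_def b1_def by (simp add: algebra_simps)
qed


lemma direction:
  fixes K :: "(real^2) set"
  assumes K: "compact K" "convex K" "K \<noteq> {}" and a: "0 \<le> a"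
  shows "measure lebesgue (minkowski_sum K (seg a (vector [1, s]))) =
         measure lebesgue K + a * (Sup ((\<lambda>x. x$2 - s * x$1) ` K) - Inf ((\<lambda>x. x$2 - s * x$1) ` K))"
proof -
  define L :: "real^2 \<Rightarrow> real^2" where "L = (\<lambda>x. vector [x$2 - s * x$1, x$1])"
  have linL: "linear L"
    unfolding L_def by (rule linearI) (simp_all add: vec_eq_iff forall_2 algebra_simps)
  have detL: "det (matrix L) = -1"
    by (simp add: det_2 matrix_def L_def axis_def)
  have Lw: "L (vector [1, s]) = axis 2 1"
    by (simp add: L_def vec_eq_iff forall_2 axis_def)
  have Ladd: "L (x + t *\<^sub>R vector [1, s]) = L x + t *\<^sub>R axis 2 1" for x t
    using linL Lw by (simp add: linear_add linear_scale)
  have img: "L ` minkowski_sum K (seg a (vector [1, s])) = minkowski_sum (L ` K) (seg a (axis 2 1))"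
  proof (intro Set.set_eqI iffI)
    fix p assume "p \<in> L ` minkowski_sum K (seg a (vector [1, s]))"
    then obtain q where q: "q \<in> minkowski_sum K (seg a (vector [1, s]))" "p = L q" by blast
    then obtain k y where ky: "k \<in> K" "y \<in> seg a (vector [1, s])" "q = k + y" unfolding mem_mink by blast
    then obtain t where t: "0 \<le> t" "t \<le> a" "y = t *\<^sub>R vector [1, s]" unfolding mem_seg by blast
    have kt: "k \<in> K" "0 \<le> t" "t \<le> a" "p = L (k + t *\<^sub>R vector [1, s])" using q ky t by auto
    then have "p = L k + t *\<^sub>R axis 2 1" by (simp add: Ladd)
    moreover have "L k \<in> L ` K" using kt by blast
    moreover have "t *\<^sub>R axis 2 1 \<in> seg a (axis 2 1)" using kt by (intro seg_memI)
    ultimately show "p \<in> minkowski_sum (L ` K) (seg a (axis 2 1))" by (metis mink_memI)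
  next
    fix p assume "p \<in> minkowski_sum (L ` K) (seg a (axis 2 1))"
    then obtain k' y where ky: "k' \<in> L ` K" "y \<in> seg a (axis 2 1)" "p = k' + y" unfolding mem_mink by blast
    then obtain t where t: "0 \<le> t" "t \<le> a" "y = t *\<^sub>R axis 2 1" unfolding mem_seg by blast
    obtain k where k: "k \<in> K" "k' = L k" using ky by blast
    have kt: "k \<in> K" "0 \<le> t" "t \<le> a" "p = L k + t *\<^sub>R axis 2 1" using k ky t by auto
    then have "p = L (k + t *\<^sub>R vector [1, s])" by (simp add: Ladd)
    moreover have "k + t *\<^sub>R vector [1, s] \<in> minkowski_sum K (seg a (vector [1, s]))"
      using kt by (intro mink_memI seg_memI)
    ultimately show "p \<in> L ` minkowski_sum K (seg a (vector [1, s]))" by blast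
  qed
  have meas: "minkowski_sum K (seg a (vector [1, s])) \<in> lmeasurable"
    by (intro lmeasurable_compact compact_mink compact_seg K)
  have "measure lebesgue (minkowski_sum K (seg a (vector [1, s])))
        = measure lebesgue (L ` minkowski_sum K (seg a (vector [1, s])))"
    using measure_linear_image[OF linL meas, unfolded detL] by simp
  also have "\<dots> = measure lebesgue (L ` K) + a * (Sup ((\<lambda>x. x$1) ` L ` K) - Inf ((\<lambda>x. x$1) ` L ` K))"
  proof -
    have c1: "compact (L ` K)" using K(1) linL by (intro compact_continuous_image linear_continuous_on) (auto simp: linear_conv_bounded_linear)
    have c2: "convex (L ` K)" using K(2) linL by (rule convex_linear_image[rotated])
    have c3: "L ` K \<noteq> {}" using K(3) by simp
    show ?thesis unfolding img by (rule vertical[OF c1 c2 c3 a])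
  qed
  also have "measure lebesgue (L ` K) = measure lebesgue K"
    using measure_linear_image[OF linL lmeasurable_compact[OF K(1)], unfolded detL] by simp
  also have "(\<lambda>x. x$1) ` L ` K = (\<lambda>x. x$2 - s * x$1) ` K"
    by (auto simp: L_def image_image)
  finally show ?thesis .
qed


definition gen :: "nat \<Rightarrow> real^2" where "gen k = vector [1, real k]"

fun Z :: "(nat \<Rightarrow> real) \<Rightarrow> nat \<Rightarrow> (real^2) set" where
  "Z \<alpha> 0 = {0}"
| "Z \<alpha> (Suc m) = minkowski_sum (Z \<alpha> m) (seg (\<alpha> m) (gen m))"

lemma Z_props:
  assumes "\<forall>k<m. 0 \<le> \<alpha> k"
  shows "compact (Z \<alpha> m) \<and> convex (Z \<alpha> m) \<and> 0 \<in> Z \<alpha> m"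
  using assms
proof (induction m)
  case 0 then show ?case by simp
next
  case (Suc m)
  then have IH: "compact (Z \<alpha> m)" "convex (Z \<alpha> m)" "0 \<in> Z \<alpha> m" and a: "0 \<le> \<alpha> m" by auto
  have "(0::real^2) + 0 \<in> Z \<alpha> (Suc m)"
    unfolding Z.simps using IH(3) seg_memI[of 0 "\<alpha> m" "gen m"] a by (intro mink_memI) auto
  then show ?case using IH by (simp add: compact_mink compact_seg convex_mink convex_seg)
qed

lemma phi_gen: "(x + t *\<^sub>R gen k)$2 - s * (x + t *\<^sub>R gen k)$1 = (x$2 - s * x$1) + t * (real k - s)"
  by (simp add: gen_def algebra_simps)

lemma Z_sup:
  assumes "\<forall>k<m. 0 \<le> \<alpha> k"
  shows "(\<forall>x\<in>Z \<alpha> m. x$2 - s * x$1 \<le> (\<Sum>k<m. max 0 (\<alpha> k * (real k - s)))) \<and>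
         (\<exists>x\<in>Z \<alpha> m. x$2 - s * x$1 = (\<Sum>k<m. max 0 (\<alpha> k * (real k - s))))"
  using assms
proof (induction m)
  case 0 then show ?case by simp
next
  case (Suc m)
  then have IH1: "\<forall>x\<in>Z \<alpha> m. x$2 - s * x$1 \<le> (\<Sum>k<m. max 0 (\<alpha> k * (real k - s)))"
    and IH2: "\<exists>x\<in>Z \<alpha> m. x$2 - s * x$1 = (\<Sum>k<m. max 0 (\<alpha> k * (real k - s)))"
    and a: "0 \<le> \<alpha> m" by auto
  have bound: "t * (real m - s) \<le> max 0 (\<alpha> m * (real m - s))" if "0 \<le> t" "t \<le> \<alpha> m" for t
  proof (cases "real m - s \<ge> 0")
    case True
    then have "t * (real m - s) \<le> \<alpha> m * (real m - s)" using that by (intro mult_right_mono)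
    then show ?thesis by simp
  next
    case False
    then have "t * (real m - s) \<le> 0" using that by (simp add: mult_nonneg_nonpos)
    then show ?thesis by simp
  qed
  show ?case
  proof
    show "\<forall>x\<in>Z \<alpha> (Suc m). x$2 - s * x$1 \<le> (\<Sum>k<Suc m. max 0 (\<alpha> k * (real k - s)))"
    proof
      fix x assume "x \<in> Z \<alpha> (Suc m)"
      then obtain y t where yt: "y \<in> Z \<alpha> m" "0 \<le> t" "t \<le> \<alpha> m" "x = y + t *\<^sub>R gen m"
        unfolding Z.simps by (rule mink_segE)
      have "x$2 - s * x$1 = (y$2 - s * y$1) + t * (real m - s)" using yt(4) phi_gen by simp
      also have "\<dots> \<le> (\<Sum>k<m. max 0 (\<alpha> k * (real k - s))) + max 0 (\<alpha> m * (real m - s))"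
        using IH1 yt bound by (intro add_mono) auto
      finally show "x$2 - s * x$1 \<le> (\<Sum>k<Suc m. max 0 (\<alpha> k * (real k - s)))" by simp
    qed
  next
    obtain y where y: "y \<in> Z \<alpha> m" "y$2 - s * y$1 = (\<Sum>k<m. max 0 (\<alpha> k * (real k - s)))" using IH2 by blast
    define t where "t = (if real m - s \<ge> 0 then \<alpha> m else 0)"
    have t: "0 \<le> t" "t \<le> \<alpha> m" using a by (auto simp: t_def)
    have "y + t *\<^sub>R gen m \<in> Z \<alpha> (Suc m)" unfolding Z.simps using y t by (intro mink_memI seg_memI)
    moreover have "(y + t *\<^sub>R gen m)$2 - s * (y + t *\<^sub>R gen m)$1 = (\<Sum>k<Suc m. max 0 (\<alpha> k * (real k - s)))"
    proof -
      have "t * (real m - s) = max 0 (\<alpha> m * (real m - s))"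
      proof (cases "real m - s \<ge> 0")
        case True then show ?thesis using a by (simp add: t_def)
      next
        case False
        then have "\<alpha> m * (real m - s) \<le> 0" using a by (simp add: mult_nonneg_nonpos)
        then show ?thesis using False by (simp add: t_def)
      qed
      then show ?thesis unfolding phi_gen y(2) by simp
    qed
    ultimately show "\<exists>x\<in>Z \<alpha> (Suc m). x$2 - s * x$1 = (\<Sum>k<Suc m. max 0 (\<alpha> k * (real k - s)))" by blast
  qed
qed

lemma Z_inf:
  assumes "\<forall>k<m. 0 \<le> \<alpha> k"
  shows "(\<forall>x\<in>Z \<alpha> m. (\<Sum>k<m. min 0 (\<alpha> k * (real k - s))) \<le> x$2 - s * x$1) \<and>
         (\<exists>x\<in>Z \<alpha> m. x$2 - s * x$1 = (\<Sum>k<m. min 0 (\<alpha> k * (real k - s))))"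
  using assms
proof (induction m)
  case 0 then show ?case by simp
next
  case (Suc m)
  then have IH1: "\<forall>x\<in>Z \<alpha> m. (\<Sum>k<m. min 0 (\<alpha> k * (real k - s))) \<le> x$2 - s * x$1"
    and IH2: "\<exists>x\<in>Z \<alpha> m. x$2 - s * x$1 = (\<Sum>k<m. min 0 (\<alpha> k * (real k - s)))"
    and a: "0 \<le> \<alpha> m" by auto
  have bound: "min 0 (\<alpha> m * (real m - s)) \<le> t * (real m - s)" if "0 \<le> t" "t \<le> \<alpha> m" for t
  proof (cases "real m - s \<ge> 0")
    case True
    then have "0 \<le> t * (real m - s)" using that by simp
    then show ?thesis by simp
  next
    case False
    then have "\<alpha> m * (real m - s) \<le> t * (real m - s)" using that by (intro mult_right_mono_neg) auto
    then show ?thesis by simp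
  qed
  show ?case
  proof
    show "\<forall>x\<in>Z \<alpha> (Suc m). (\<Sum>k<Suc m. min 0 (\<alpha> k * (real k - s))) \<le> x$2 - s * x$1"
    proof
      fix x assume "x \<in> Z \<alpha> (Suc m)"
      then obtain y t where yt: "y \<in> Z \<alpha> m" "0 \<le> t" "t \<le> \<alpha> m" "x = y + t *\<^sub>R gen m"
        unfolding Z.simps by (rule mink_segE)
      have "(\<Sum>k<m. min 0 (\<alpha> k * (real k - s))) + min 0 (\<alpha> m * (real m - s)) \<le> (y$2 - s * y$1) + t * (real m - s)"
        using IH1 yt bound by (intro add_mono) auto
      also have "\<dots> = x$2 - s * x$1" using yt(4) phi_gen by simp
      finally show "(\<Sum>k<Suc m. min 0 (\<alpha> k * (real k - s))) \<le> x$2 - s * x$1" by simp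
    qed
  next
    obtain y where y: "y \<in> Z \<alpha> m" "y$2 - s * y$1 = (\<Sum>k<m. min 0 (\<alpha> k * (real k - s)))" using IH2 by blast
    define t where "t = (if real m - s \<ge> 0 then 0 else \<alpha> m)"
    have t: "0 \<le> t" "t \<le> \<alpha> m" using a by (auto simp: t_def)
    have "y + t *\<^sub>R gen m \<in> Z \<alpha> (Suc m)" unfolding Z.simps using y t by (intro mink_memI seg_memI)
    moreover have "(y + t *\<^sub>R gen m)$2 - s * (y + t *\<^sub>R gen m)$1 = (\<Sum>k<Suc m. min 0 (\<alpha> k * (real k - s)))"
    proof -
      have "t * (real m - s) = min 0 (\<alpha> m * (real m - s))"
      proof (cases "real m - s \<ge> 0")
        case True then show ?thesis using a by (simp add: t_def)
      next
        case False
        then have "\<alpha> m * (real m - s) \<le> 0" using a by (simp add: mult_nonneg_nonpos)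
        then show ?thesis using False by (simp add: t_def)
      qed
      then show ?thesis unfolding phi_gen y(2) by simp
    qed
    ultimately show "\<exists>x\<in>Z \<alpha> (Suc m). x$2 - s * x$1 = (\<Sum>k<Suc m. min 0 (\<alpha> k * (real k - s)))" by blast
  qed
qed

lemma Z_width:
  assumes "\<forall>k<m. 0 \<le> \<alpha> k"
  shows "Sup ((\<lambda>x. x$2 - s * x$1) ` Z \<alpha> m) - Inf ((\<lambda>x. x$2 - s * x$1) ` Z \<alpha> m)
         = (\<Sum>k<m. \<alpha> k * \<bar>real k - s\<bar>)"
proof -
  have sup: "Sup ((\<lambda>x. x$2 - s * x$1) ` Z \<alpha> m) = (\<Sum>k<m. max 0 (\<alpha> k * (real k - s)))"
  proof (rule cSup_eq_maximum)
    obtain x where x: "x \<in> Z \<alpha> m" "x$2 - s * x$1 = (\<Sum>k<m. max 0 (\<alpha> k * (real k - s)))"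
      using conjunct2[OF Z_sup[OF assms, of s]] by blast
    then show "(\<Sum>k<m. max 0 (\<alpha> k * (real k - s))) \<in> (\<lambda>x. x$2 - s * x$1) ` Z \<alpha> m"
      by (intro image_eqI[where x = x]) auto
  qed (use Z_sup[OF assms, of s] in auto)
  have inf: "Inf ((\<lambda>x. x$2 - s * x$1) ` Z \<alpha> m) = (\<Sum>k<m. min 0 (\<alpha> k * (real k - s)))"
  proof (rule cInf_eq_minimum)
    obtain x where x: "x \<in> Z \<alpha> m" "x$2 - s * x$1 = (\<Sum>k<m. min 0 (\<alpha> k * (real k - s)))"
      using conjunct2[OF Z_inf[OF assms, of s]] by blast
    then show "(\<Sum>k<m. min 0 (\<alpha> k * (real k - s))) \<in> (\<lambda>x. x$2 - s * x$1) ` Z \<alpha> m"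
      by (intro image_eqI[where x = x]) auto
  qed (use Z_inf[OF assms, of s] in auto)
  have "max 0 (\<alpha> k * (real k - s)) - min 0 (\<alpha> k * (real k - s)) = \<alpha> k * \<bar>real k - s\<bar>" if "k < m" for k
  proof -
    have "max 0 x - min 0 x = \<bar>x\<bar>" for x :: real by auto
    moreover have "\<bar>\<alpha> k * (real k - s)\<bar> = \<alpha> k * \<bar>real k - s\<bar>" using assms that by (simp add: abs_mult)
    ultimately show ?thesis by simp
  qed
  then show ?thesis unfolding sup inf sum_subtractf[symmetric] by (intro sum.cong) auto
qed

definition Q :: "(nat \<Rightarrow> real) \<Rightarrow> nat \<Rightarrow> real" where
  "Q \<alpha> m = (\<Sum>k<m. \<Sum>l<m. \<alpha> k * \<alpha> l * \<bar>real k - real l\<bar>) / 2"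

lemma Q_Suc: "Q \<alpha> (Suc m) = Q \<alpha> m + \<alpha> m * (\<Sum>k<m. \<alpha> k * \<bar>real k - real m\<bar>)"
proof -
  have "(\<Sum>k<Suc m. \<Sum>l<Suc m. \<alpha> k * \<alpha> l * \<bar>real k - real l\<bar>)
     = (\<Sum>k<m. \<Sum>l<m. \<alpha> k * \<alpha> l * \<bar>real k - real l\<bar>) + (\<Sum>k<m. \<alpha> k * \<alpha> m * \<bar>real k - real m\<bar>)
       + (\<Sum>l<m. \<alpha> m * \<alpha> l * \<bar>real m - real l\<bar>)"
    by (simp add: sum.distrib)
  also have "(\<Sum>l<m. \<alpha> m * \<alpha> l * \<bar>real m - real l\<bar>) = (\<Sum>k<m. \<alpha> k * \<alpha> m * \<bar>real k - real m\<bar>)"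
    by (intro sum.cong) (auto simp: abs_minus_commute)
  finally show ?thesis unfolding Q_def by (simp add: sum_distrib_left algebra_simps)
qed

lemma Z_measure:
  assumes "\<forall>k<m. 0 \<le> \<alpha> k"
  shows "measure lebesgue (Z \<alpha> m) = Q \<alpha> m"
  using assms
proof (induction m)
  case 0 then show ?case by (simp add: Q_def)
next
  case (Suc m)
  then have IH: "measure lebesgue (Z \<alpha> m) = Q \<alpha> m" and a: "0 \<le> \<alpha> m" and all: "\<forall>k<m. 0 \<le> \<alpha> k" by auto
  have P: "compact (Z \<alpha> m)" "convex (Z \<alpha> m)" "Z \<alpha> m \<noteq> {}" using Z_props[OF all] by auto
  have "measure lebesgue (Z \<alpha> (Suc m)) = measure lebesgue (Z \<alpha> m) + \<alpha> m * (\<Sum>k<m. \<alpha> k * \<bar>real k - real m\<bar>)"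
    unfolding Z.simps gen_def using direction[OF P a, of "real m"] Z_width[OF all, of "real m"] by simp
  then show ?case using IH Q_Suc by simp
qed


lemma minkE:
  assumes "p \<in> minkowski_sum A B"
  obtains x y where "x \<in> A" "y \<in> B" "p = x + y"
  using assms unfolding minkowski_sum_def by blast

lemma seg_add:
  assumes "0 \<le> a" "0 \<le> b"
  shows "minkowski_sum (seg a v) (seg b v) = seg (a+b) v"
proof (intro Set.set_eqI iffI)
  fix p assume "p \<in> minkowski_sum (seg a v) (seg b v)"
  then obtain x y where xy: "x \<in> seg a v" "y \<in> seg b v" "p = x + y" by (rule minkE)
  obtain t where t: "0 \<le> t" "t \<le> a" "x = t *\<^sub>R v" using xy(1) unfolding mem_seg by blast
  obtain u where u: "0 \<le> u" "u \<le> b" "y = u *\<^sub>R v" using xy(2) unfolding mem_seg by blast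
  have "p = (t + u) *\<^sub>R v" using xy t u by (simp add: scaleR_add_left)
  moreover have "(t + u) *\<^sub>R v \<in> seg (a+b) v" using t u by (intro seg_memI) auto
  ultimately show "p \<in> seg (a+b) v" by simp
next
  fix p assume "p \<in> seg (a+b) v"
  then obtain t where t: "0 \<le> t" "t \<le> a + b" "p = t *\<^sub>R v" unfolding mem_seg by blast
  define t1 where "t1 = min t a"
  have s1: "t1 *\<^sub>R v \<in> seg a v" using t assms by (intro seg_memI) (auto simp: t1_def)
  have s2: "(t - t1) *\<^sub>R v \<in> seg b v" using t assms by (intro seg_memI) (auto simp: t1_def)
  have peq0: "p = (t1 + (t - t1)) *\<^sub>R v" using t(3) by simp
  have peq: "p = t1 *\<^sub>R v + (t - t1) *\<^sub>R v" using peq0 by (simp only: scaleR_add_left)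
  show "p \<in> minkowski_sum (seg a v) (seg b v)" unfolding peq by (rule mink_memI[OF s1 s2])
qed

lemma mink_swap4:
  "minkowski_sum (minkowski_sum A S) (minkowski_sum B T) = minkowski_sum (minkowski_sum A B) (minkowski_sum S T)"
proof (intro Set.set_eqI iffI)
  fix p assume "p \<in> minkowski_sum (minkowski_sum A S) (minkowski_sum B T)"
  then obtain x y where xy: "x \<in> minkowski_sum A S" "y \<in> minkowski_sum B T" "p = x + y" by (rule minkE)
  obtain a s where as: "a \<in> A" "s \<in> S" "x = a + s" using xy(1) by (rule minkE)
  obtain b t where bt: "b \<in> B" "t \<in> T" "y = b + t" using xy(2) by (rule minkE)
  have peq: "p = (a + b) + (s + t)" using xy as bt by (simp add: algebra_simps)
  show "p \<in> minkowski_sum (minkowski_sum A B) (minkowski_sum S T)"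
    unfolding peq by (rule mink_memI[OF mink_memI[OF as(1) bt(1)] mink_memI[OF as(2) bt(2)]])
next
  fix p assume "p \<in> minkowski_sum (minkowski_sum A B) (minkowski_sum S T)"
  then obtain x y where xy: "x \<in> minkowski_sum A B" "y \<in> minkowski_sum S T" "p = x + y" by (rule minkE)
  obtain a b where ab: "a \<in> A" "b \<in> B" "x = a + b" using xy(1) by (rule minkE)
  obtain s t where st: "s \<in> S" "t \<in> T" "y = s + t" using xy(2) by (rule minkE)
  have peq: "p = (a + s) + (b + t)" using xy ab st by (simp add: algebra_simps)
  show "p \<in> minkowski_sum (minkowski_sum A S) (minkowski_sum B T)"
    unfolding peq by (rule mink_memI[OF mink_memI[OF ab(1) st(1)] mink_memI[OF ab(2) st(2)]])
qed

lemma Z_add: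
  assumes "\<forall>k<m. 0 \<le> \<alpha> k" "\<forall>k<m. 0 \<le> \<beta> k"
  shows "minkowski_sum (Z \<alpha> m) (Z \<beta> m) = Z (\<lambda>k. \<alpha> k + \<beta> k) m"
  using assms
proof (induction m)
  case 0 then show ?case by (simp add: mink0)
next
  case (Suc m)
  then have IH: "minkowski_sum (Z \<alpha> m) (Z \<beta> m) = Z (\<lambda>k. \<alpha> k + \<beta> k) m"
    and a: "0 \<le> \<alpha> m" "0 \<le> \<beta> m" by auto
  show ?case unfolding Z.simps mink_swap4 IH seg_add[OF a] ..
qed

definition Bf :: "nat \<Rightarrow> (nat \<Rightarrow> real) \<Rightarrow> (nat \<Rightarrow> real) \<Rightarrow> real" where
  "Bf m \<alpha> \<beta> = (\<Sum>k<m. \<Sum>l<m. \<alpha> k * \<beta> l * \<bar>real k - real l\<bar>) / 2"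

lemma Bf_sym: "Bf m \<alpha> \<beta> = Bf m \<beta> \<alpha>"
proof -
  have "(\<Sum>k<m. \<Sum>l<m. \<alpha> k * \<beta> l * \<bar>real k - real l\<bar>) = (\<Sum>l<m. \<Sum>k<m. \<alpha> k * \<beta> l * \<bar>real k - real l\<bar>)"
    by (rule sum.swap)
  also have "\<dots> = (\<Sum>l<m. \<Sum>k<m. \<beta> l * \<alpha> k * \<bar>real l - real k\<bar>)"
    by (intro sum.cong refl) (simp add: abs_minus_commute)
  finally show ?thesis unfolding Bf_def by simp
qed

lemma mixed_Z:
  assumes "\<forall>k<m. 0 \<le> \<alpha> k" "\<forall>k<m. 0 \<le> \<beta> k"
  shows "mixed_area (Z \<alpha> m) (Z \<beta> m) = Bf m \<alpha> \<beta>"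
proof -
  have ab: "\<forall>k<m. 0 \<le> \<alpha> k + \<beta> k" using assms by (simp add: add_nonneg_nonneg)
  have e1: "(\<Sum>k<m. \<Sum>l<m. (\<alpha> k + \<beta> k) * (\<alpha> l + \<beta> l) * \<bar>real k - real l\<bar>) =
    (\<Sum>k<m. \<Sum>l<m. \<alpha> k * \<alpha> l * \<bar>real k - real l\<bar>) + (\<Sum>k<m. \<Sum>l<m. \<alpha> k * \<beta> l * \<bar>real k - real l\<bar>)
    + (\<Sum>k<m. \<Sum>l<m. \<beta> k * \<alpha> l * \<bar>real k - real l\<bar>) + (\<Sum>k<m. \<Sum>l<m. \<beta> k * \<beta> l * \<bar>real k - real l\<bar>)"
    by (simp add: algebra_simps sum.distrib)
  have e2: "(\<Sum>k<m. \<Sum>l<m. \<beta> k * \<alpha> l * \<bar>real k - real l\<bar>) = (\<Sum>k<m. \<Sum>l<m. \<alpha> k * \<beta> l * \<bar>real k - real l\<bar>)"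
    using Bf_sym[of m \<beta> \<alpha>] unfolding Bf_def by simp
  have "mixed_area (Z \<alpha> m) (Z \<beta> m) = (Q (\<lambda>k. \<alpha> k + \<beta> k) m - Q \<alpha> m - Q \<beta> m) / 2"
    unfolding mixed_area_def vol2_def Z_add[OF assms] Z_measure[OF ab] Z_measure[OF assms(1)] Z_measure[OF assms(2)] ..
  also have "\<dots> = Bf m \<alpha> \<beta>"
    unfolding Q_def Bf_def e1 e2 by (simp add: field_simps)
  finally show ?thesis .
qed

lemma convex_body_Z:
  assumes "\<forall>k<m. 0 \<le> \<alpha> k"
  shows "convex_body2 (Z \<alpha> m)"
  using Z_props[OF assms] unfolding convex_body2_def by auto


definition rho :: "nat \<Rightarrow> nat \<Rightarrow> real" where
  "rho j k = (if j = 0 then (if odd k then 1 else 0)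
              else (if k = 2*j then 2 else if Suc k = 2*j \<or> k = Suc (2*j) then -1 else 0))"

lemma rho_sum:
  assumes "1 \<le> j" "Suc (2*j) < M"
  shows "(\<Sum>k<M. rho j k * f k) = 2 * f (2*j) - f (2*j - 1) - f (Suc (2*j))"
proof -
  have pt: "rho j k * f k = (if k = 2*j then 2 * f k else 0) + (if k = 2*j - 1 then - f k else 0)
            + (if k = Suc (2*j) then - f k else 0)" for k
    using assms(1) by (auto simp: rho_def)
  have "(\<Sum>k<M. rho j k * f k) = (\<Sum>k<M. (if k = 2*j then 2 * f k else 0)) + (\<Sum>k<M. (if k = 2*j - 1 then - f k else 0))
            + (\<Sum>k<M. (if k = Suc (2*j) then - f k else 0))"
    unfolding pt by (simp add: sum.distrib)
  also have "\<dots> = 2 * f (2*j) - f (2*j - 1) - f (Suc (2*j))"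
    using assms by (simp add: sum.delta)
  finally show ?thesis .
qed

lemma abs_ident:
  assumes "1 \<le> j"
  shows "2 * \<bar>real (2*j) - real l\<bar> - \<bar>real (2*j - 1) - real l\<bar> - \<bar>real (Suc (2*j)) - real l\<bar>
         = (if l = 2*j then -2 else 0)"
proof -
  have r: "real (2*j - 1) = real (2*j) - 1" using assms by (simp add: of_nat_diff)
  consider "l < 2*j" | "l = 2*j" | "l > 2*j" by linarith
  then show ?thesis
  proof cases
    case 1
    then have "real l \<le> real (2*j) - 1" by (simp add: of_nat_diff)
    then show ?thesis using 1 unfolding r by (simp add: abs_if)
  next
    case 2 then show ?thesis unfolding r by simp
  next
    case 3
    then have "real l \<ge> real (2*j) + 1" by simp
    then show ?thesis using 3 unfolding r by (simp add: abs_if)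
  qed
qed

lemma Bf_rho:
  assumes "1 \<le> j" "Suc (2*j) < M"
  shows "Bf M (rho j) \<beta> = - \<beta> (2*j)"
proof -
  have "(\<Sum>k<M. \<Sum>l<M. rho j k * \<beta> l * \<bar>real k - real l\<bar>) = (\<Sum>l<M. \<Sum>k<M. rho j k * \<beta> l * \<bar>real k - real l\<bar>)"
    by (rule sum.swap)
  also have "\<dots> = (\<Sum>l<M. \<beta> l * (\<Sum>k<M. rho j k * \<bar>real k - real l\<bar>))"
    by (simp add: sum_distrib_left mult_ac)
  also have "\<dots> = (\<Sum>l<M. \<beta> l * (if l = 2*j then -2 else 0))"
  proof (intro sum.cong refl)
    fix l
    have "(\<Sum>k<M. rho j k * \<bar>real k - real l\<bar>) =
      2 * \<bar>real (2*j) - real l\<bar> - \<bar>real (2*j - 1) - real l\<bar> - \<bar>real (Suc (2*j)) - real l\<bar>"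
      by (rule rho_sum[OF assms])
    also have "\<dots> = (if l = 2*j then -2 else 0)" by (rule abs_ident[OF assms(1)])
    finally show "\<beta> l * (\<Sum>k<M. rho j k * \<bar>real k - real l\<bar>) = \<beta> l * (if l = 2*j then -2 else 0)"
      by simp
  qed
  also have "\<dots> = - 2 * \<beta> (2*j)"
    using assms by (simp add: sum.delta' if_distrib[of "\<lambda>x. _ * x"] cong: if_cong)
  finally show ?thesis unfolding Bf_def by simp
qed

lemma rho_even: "1 \<le> i \<Longrightarrow> rho j (2*i) = (if j = i then 2 else 0)"
  unfolding rho_def by auto

definition piv :: "nat \<Rightarrow> nat \<Rightarrow> real" where
  "piv M l = (if l = 0 then Bf M (rho 0) (rho 0) else -2)"

lemma Bf_rho_rho:
  assumes "Suc (2*l) < M" "Suc (2*m) < M"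
  shows "Bf M (rho l) (rho m) = (if l = m then piv M l else 0)"
proof (cases "l = 0")
  case True
  show ?thesis
  proof (cases "m = 0")
    case True then show ?thesis using \<open>l = 0\<close> by (simp add: piv_def)
  next
    case False
    then have "Bf M (rho l) (rho m) = Bf M (rho m) (rho l)" by (simp add: Bf_sym)
    also have "\<dots> = - rho l (2*m)" using False assms by (intro Bf_rho) auto
    also have "\<dots> = 0" using \<open>l = 0\<close> by (simp add: rho_def)
    finally show ?thesis using False \<open>l = 0\<close> by simp
  qed
next
  case False
  have "Bf M (rho l) (rho m) = - rho m (2*l)" using False assms by (intro Bf_rho) auto
  also have "\<dots> = (if m = l then -2 else 0)" using False by (simp add: rho_even)
  finally show ?thesis using False by (auto simp: piv_def)
qed

lemma Bf_sum_left:
  assumes "finite S"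
  shows "Bf M (\<lambda>k. \<Sum>s\<in>S. a s * f s k) \<beta> = (\<Sum>s\<in>S. a s * Bf M (f s) \<beta>)"
proof -
  have "(\<Sum>k<M. \<Sum>l<M. (\<Sum>s\<in>S. a s * f s k) * \<beta> l * \<bar>real k - real l\<bar>)
      = (\<Sum>k<M. \<Sum>l<M. \<Sum>s\<in>S. a s * (f s k * \<beta> l * \<bar>real k - real l\<bar>))"
    by (intro sum.cong refl) (simp add: sum_distrib_left sum_distrib_right mult_ac)
  also have "\<dots> = (\<Sum>k<M. \<Sum>s\<in>S. \<Sum>l<M. a s * (f s k * \<beta> l * \<bar>real k - real l\<bar>))"
    by (intro sum.cong refl) (rule sum.swap)
  also have "\<dots> = (\<Sum>s\<in>S. \<Sum>k<M. \<Sum>l<M. a s * (f s k * \<beta> l * \<bar>real k - real l\<bar>))"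
    by (rule sum.swap)
  also have "\<dots> = (\<Sum>s\<in>S. a s * (\<Sum>k<M. \<Sum>l<M. f s k * \<beta> l * \<bar>real k - real l\<bar>))"
    by (simp add: sum_distrib_left)
  finally have eq: "(\<Sum>k<M. \<Sum>l<M. (\<Sum>s\<in>S. a s * f s k) * \<beta> l * \<bar>real k - real l\<bar>)
      = (\<Sum>s\<in>S. a s * (\<Sum>k<M. \<Sum>l<M. f s k * \<beta> l * \<bar>real k - real l\<bar>))" .
  show ?thesis unfolding Bf_def eq times_divide_eq_right sum_divide_distrib[symmetric] ..
qed

lemma Bf_sum_right:
  assumes "finite S"
  shows "Bf M \<beta> (\<lambda>k. \<Sum>s\<in>S. a s * f s k) = (\<Sum>s\<in>S. a s * Bf M \<beta> (f s))"
  using Bf_sum_left[OF assms] by (simp add: Bf_sym)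

definition alpha :: "(nat \<Rightarrow> nat \<Rightarrow> real) \<Rightarrow> nat \<Rightarrow> nat \<Rightarrow> real" where
  "alpha c j = (\<lambda>k. \<Sum>l\<le>j. c j l * rho l k)"

lemma gram:
  assumes "i \<le> j" "j < n"
  shows "Bf (2*n) (alpha c i) (alpha c j) = (\<Sum>l\<le>i. c i l * c j l * piv (2*n) l)"
proof -
  have "Bf (2*n) (alpha c i) (alpha c j) = (\<Sum>l\<le>i. c i l * Bf (2*n) (rho l) (alpha c j))"
    unfolding alpha_def[of c i] by (rule Bf_sum_left) simp
  also have "\<dots> = (\<Sum>l\<le>i. c i l * (\<Sum>m\<le>j. c j m * Bf (2*n) (rho l) (rho m)))"
    unfolding alpha_def by (simp add: Bf_sum_right)
  also have "\<dots> = (\<Sum>l\<le>i. c i l * (\<Sum>m\<le>j. c j m * (if l = m then piv (2*n) l else 0)))"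
  proof (intro sum.cong refl arg_cong2[where f = "(*)"])
    fix l m assume "l \<in> {..i}" "m \<in> {..j}"
    then show "Bf (2*n) (rho l) (rho m) = (if l = m then piv (2*n) l else 0)"
      using assms by (intro Bf_rho_rho) auto
  qed
  also have "\<dots> = (\<Sum>l\<le>i. c i l * c j l * piv (2*n) l)"
  proof (intro sum.cong refl)
    fix l assume "l \<in> {..i}"
    then have "l \<le> j" using assms by auto
    then have "(\<Sum>m\<le>j. c j m * (if l = m then piv (2*n) l else 0)) = c j l * piv (2*n) l"
      by (simp add: if_distrib[of "\<lambda>x. c j _ * x"] sum.delta cong: if_cong)
    then show "c i l * (\<Sum>m\<le>j. c j m * (if l = m then piv (2*n) l else 0)) = c i l * c j l * piv (2*n) l"
      by simp
  qed
  finally show ?thesis .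
qed

lemma piv0_pos:
  assumes "2 \<le> n"
  shows "piv (2*n) 0 > 0"
proof -
  let ?g = "\<lambda>k l. rho 0 k * rho 0 l * \<bar>real k - real l\<bar>"
  have nn: "0 \<le> ?g k l" for k l by (simp add: rho_def)
  have "?g 1 3 \<le> (\<Sum>l<2*n. ?g 1 l)"
    using assms by (intro member_le_sum nn) auto
  also have "\<dots> \<le> (\<Sum>k<2*n. \<Sum>l<2*n. ?g k l)"
    using assms by (intro member_le_sum[where f = "\<lambda>k. \<Sum>l<2*n. ?g k l"] sum_nonneg nn) auto
  finally have "2 \<le> (\<Sum>k<2*n. \<Sum>l<2*n. ?g k l)" by (simp add: rho_def)
  then show ?thesis by (simp add: piv_def Bf_def)
qed

lemma piv_nz: "2 \<le> n \<Longrightarrow> piv (2*n) l \<noteq> 0"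
  using piv0_pos[of n] by (auto simp: piv_def)

lemma rho_ge: "rho l k \<ge> -1"
  by (auto simp: rho_def)

lemma rho_even_nonneg: "even k \<Longrightarrow> 1 \<le> l \<Longrightarrow> rho l k \<ge> 0"
  unfolding rho_def by (auto; presburger)

lemma alpha_nonneg:
  assumes pos: "\<forall>l\<in>{1..j}. 0 < c j l" and dom: "(\<Sum>l\<in>{1..j}. c j l) < c j 0"
  shows "0 \<le> alpha c j k"
proof -
  have split: "alpha c j k = c j 0 * rho 0 k + (\<Sum>l\<in>{1..j}. c j l * rho l k)"
    unfolding alpha_def atMost_atLeast0 by (simp add: sum.atLeast_Suc_atMost)
  show ?thesis
  proof (cases "even k")
    case True
    have "0 \<le> (\<Sum>l\<in>{1..j}. c j l * rho l k)"
      using pos True by (intro sum_nonneg mult_nonneg_nonneg) (auto intro: rho_even_nonneg less_imp_le)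
    then show ?thesis using True split by (simp add: rho_def)
  next
    case False
    have "(\<Sum>l\<in>{1..j}. c j l * (-1)) \<le> (\<Sum>l\<in>{1..j}. c j l * rho l k)"
      using pos by (intro sum_mono mult_left_mono rho_ge) (auto intro: less_imp_le)
    then have "- (\<Sum>l\<in>{1..j}. c j l) \<le> (\<Sum>l\<in>{1..j}. c j l * rho l k)" by (simp add: sum_negf)
    then show ?thesis using False split dom by (simp add: rho_def)
  qed
qed


lemma chol_full:
  fixes c c' :: "nat \<Rightarrow> nat \<Rightarrow> real" and p :: "nat \<Rightarrow> real"
  assumes pnz: "\<forall>l<n. p l \<noteq> 0" and cp: "\<forall>j<n. c j j > 0" and cp': "\<forall>j<n. c' j j > 0"
    and eq: "\<forall>i j. i \<le> j \<and> j < n \<longrightarrow> (\<Sum>l\<le>i. c i l * c j l * p l) = (\<Sum>l\<le>i. c' i l * c' j l * p l)"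
  shows "\<forall>j l. l \<le> j \<and> j < n \<longrightarrow> c j l = c' j l"
proof -
  have "\<forall>j. i \<le> j \<and> j < n \<longrightarrow> c j i = c' j i" for i
  proof (induction i rule: less_induct)
    case (less i)
    have IH: "c j l = c' j l" if "l < i" "i \<le> j" "j < n" for j l
      using less that by auto
    have split: "(\<Sum>l\<le>i. c i l * c j l * p l) - (\<Sum>l\<le>i. c' i l * c' j l * p l)
        = c i i * c j i * p i - c' i i * c' j i * p i" if "i \<le> j" "j < n" for j
    proof -
      have "(\<Sum>l<i. c i l * c j l * p l) = (\<Sum>l<i. c' i l * c' j l * p l)"
        using IH[of _ i] IH[of _ j] that by (intro sum.cong refl) auto
      then show ?thesis by (simp add: lessThan_Suc_atMost[symmetric])
    qed
    show ?case
    proof (intro allI impI)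
      fix j assume j: "i \<le> j \<and> j < n"
      then have "i < n" by simp
      have "c i i * c i i * p i = c' i i * c' i i * p i"
        using split[of i] eq \<open>i < n\<close> by auto
      then have "c i i * c i i = c' i i * c' i i" using pnz \<open>i < n\<close> by simp
      then have dii: "c i i = c' i i"
        using cp cp' \<open>i < n\<close> by (metis less_eq_real_def mult_mono mult_strict_mono not_less_iff_gr_or_eq)
      have "c i i * c j i * p i = c' i i * c' j i * p i"
        using split[of j] eq j by auto
      then show "c j i = c' j i" using dii cp \<open>i < n\<close> pnz by auto
    qed
  qed
  then show ?thesis by blast
qed

lemma chol_off:
  fixes c c' :: "nat \<Rightarrow> nat \<Rightarrow> real" and p :: "nat \<Rightarrow> real"
  assumes pnz: "\<forall>l<n. p l \<noteq> 0" and cd: "\<forall>j<n. c j j = c' j j \<and> c j j \<noteq> 0"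
    and eq: "\<forall>i j. i < j \<and> j < n \<longrightarrow> (\<Sum>l\<le>i. c i l * c j l * p l) = (\<Sum>l\<le>i. c' i l * c' j l * p l)"
  shows "\<forall>j l. l \<le> j \<and> j < n \<longrightarrow> c j l = c' j l"
proof -
  have "\<forall>j. i \<le> j \<and> j < n \<longrightarrow> c j i = c' j i" for i
  proof (induction i rule: less_induct)
    case (less i)
    have IH: "c j l = c' j l" if "l < i" "i \<le> j" "j < n" for j l
      using less that by auto
    show ?case
    proof (intro allI impI)
      fix j assume j: "i \<le> j \<and> j < n"
      show "c j i = c' j i"
      proof (cases "i = j")
        case True then show ?thesis using cd j by auto
      next
        case False
        then have ij: "i < j" using j by simp
        have "(\<Sum>l<i. c i l * c j l * p l) = (\<Sum>l<i. c' i l * c' j l * p l)"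
          using IH[of _ i] IH[of _ j] j ij by (intro sum.cong refl) auto
        then have "c i i * c j i * p i = c' i i * c' j i * p i"
          using eq[rule_format, of i j] ij j by (simp add: lessThan_Suc_atMost[symmetric])
        moreover have "i < n" using j ij by simp
        then have "c i i = c' i i" "c i i \<noteq> 0" "p i \<noteq> 0" using cd pnz by auto
        ultimately show ?thesis by simp
      qed
    qed
  qed
  then show ?thesis by blast
qed


lemma interior_from_inj:
  fixes V :: "(nat \<Rightarrow> real) set" and g :: "(nat \<Rightarrow> real) \<Rightarrow> nat \<Rightarrow> real"
  assumes V: "open V" and Ne: "topspace (Euclidean_space N) \<inter> V \<noteq> {}"
    and cont: "\<And>i. i < N \<Longrightarrow> continuous_on UNIV (\<lambda>x. g x i)"
    and inj: "inj_on (\<lambda>x i. if i < N then g x i else 0) (topspace (Euclidean_space N) \<inter> V)"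
    and sub: "(\<lambda>x i. if i < N then g x i else 0) ` (topspace (Euclidean_space N) \<inter> V) \<subseteq> S"
  shows "Euclidean_space N interior_of S \<noteq> {}"
proof -
  define U where "U = topspace (Euclidean_space N) \<inter> V"
  define F where "F = (\<lambda>x i. if i < N then g x i else 0)"
  have oV: "openin (powertop_real UNIV) V" using V by (simp add: euclidean_product_topology)
  have oU: "openin (Euclidean_space N) U"
    unfolding U_def topspace_Euclidean_space unfolding Euclidean_space_def openin_subtopology
    using oV by (intro exI[of _ V]) auto
  have cF: "continuous_map (subtopology (Euclidean_space N) U) (Euclidean_space N) F"
    unfolding F_def continuous_map_componentwise_Euclidean_space
  proof (intro allI impI)
    fix i assume "i < N"
    then have "continuous_map euclidean euclidean (\<lambda>x. g x i)" using cont by simp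
    then have "continuous_map (powertop_real UNIV) euclidean (\<lambda>x. g x i)"
      by (simp add: euclidean_product_topology)
    then show "continuous_map (subtopology (Euclidean_space N) U) euclidean (\<lambda>x. g x i)"
      unfolding Euclidean_space_def subtopology_subtopology by (rule continuous_map_from_subtopology)
  qed
  have "openin (Euclidean_space N) (F ` U)"
    by (rule invariance_of_domain_Euclidean_space[OF oU cF]) (use inj in \<open>simp add: F_def U_def\<close>)
  moreover have "F ` U \<subseteq> S" using sub by (simp add: F_def U_def)
  ultimately have "F ` U \<subseteq> Euclidean_space N interior_of S" by (rule interior_of_maximal[rotated])
  moreover have "F ` U \<noteq> {}" using Ne by (simp add: U_def)
  ultimately show ?thesis by blast
qed

definition tri :: "nat \<Rightarrow> nat" where "tri j = j * (j + 1) div 2"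

lemma tri_Suc: "tri (Suc j) = tri j + Suc j"
proof -
  have "Suc j * (Suc j + 1) = j * (j + 1) + 2 * Suc j" by (simp add: algebra_simps)
  then show ?thesis unfolding tri_def by simp
qed

lemma tri_mono: "j \<le> j' \<Longrightarrow> tri j \<le> tri j'"
  unfolding tri_def by (intro div_le_mono mult_le_mono) auto

lemma enc_lt: "l \<le> j \<Longrightarrow> tri j + l < tri (Suc j)"
  by (simp add: tri_Suc)

lemma enc_inj:
  assumes "l \<le> j" "l' \<le> j'" "tri j + l = tri j' + l'"
  shows "j = j' \<and> l = l'"
proof -
  have "\<not> j < j'" if "l \<le> j" "l' \<le> j'" "tri j + l = tri j' + l'" for j j' l l'
  proof
    assume "j < j'"
    then have "tri (Suc j) \<le> tri j'" by (intro tri_mono) simp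
    then show False using enc_lt[OF that(1)] that(3) by simp
  qed
  from this[OF assms] this[OF assms(2,1) assms(3)[symmetric]] have "j = j'" by simp
  then show ?thesis using assms by simp
qed

lemma enc_surj: "k < tri n \<Longrightarrow> \<exists>j l. l \<le> j \<and> j < n \<and> k = tri j + l"
proof (induction n)
  case 0 then show ?case by (simp add: tri_def)
next
  case (Suc n)
  show ?case
  proof (cases "k < tri n")
    case True then show ?thesis using Suc.IH by (meson less_SucI)
  next
    case False
    then have "k - tri n \<le> n" using Suc.prems by (simp add: tri_Suc)
    then show ?thesis using False by (intro exI[of _ n] exI[of _ "k - tri n"]) auto
  qed
qed

lemma tri_choose: "(n + 1) choose 2 = tri n"
  unfolding tri_def choose_two by (simp add: mult.commute)

lemma tri_choose': "n \<ge> 1 \<Longrightarrow> n choose 2 = tri (n - 1)"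
  unfolding tri_def choose_two by (cases n) (auto simp: mult.commute)

definition decj :: "nat \<Rightarrow> nat" where "decj k = (SOME j. \<exists>l. l \<le> j \<and> k = tri j + l)"
definition decl :: "nat \<Rightarrow> nat" where "decl k = k - tri (decj k)"

lemma dec_enc:
  assumes "l \<le> j"
  shows "decj (tri j + l) = j" "decl (tri j + l) = l"
proof -
  have ex: "\<exists>l'. l' \<le> j \<and> tri j + l = tri j + l'" using assms by blast
  have "\<exists>l'. l' \<le> decj (tri j + l) \<and> tri j + l = tri (decj (tri j + l)) + l'"
    unfolding decj_def by (rule someI_ex) (use ex in blast)
  then obtain l' where "l' \<le> decj (tri j + l)" "tri j + l = tri (decj (tri j + l)) + l'" by blast
  then show "decj (tri j + l) = j" using enc_inj[OF assms] by metis
  then show "decl (tri j + l) = l" unfolding decl_def by simp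
qed


lemma cont_coord: "continuous_on UNIV (\<lambda>x::nat\<Rightarrow>real. x k)" by simp

lemma cont_gram:
  "continuous_on UNIV (\<lambda>x::nat\<Rightarrow>real. \<Sum>m\<le>L. x (a m) * x (b m) * r m)"
  by (intro continuous_intros cont_coord)

lemma MV_part:
  assumes n: "2 \<le> n"
  shows "Euclidean_space ((n + 1) choose 2) interior_of MV n \<noteq> {}"
proof -
  define N where "N = tri n"
  define M where "M = 2 * n"
  define cM :: "(nat \<Rightarrow> real) \<Rightarrow> nat \<Rightarrow> nat \<Rightarrow> real" where "cM x j l = x (tri j + l)" for x j l
  define g :: "(nat \<Rightarrow> real) \<Rightarrow> nat \<Rightarrow> real" where
    "g x k = (\<Sum>m\<le>decl k. x (tri (decl k) + m) * x (tri (decj k) + m) * piv M m)" for x k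
  define V :: "(nat \<Rightarrow> real) set" where
    "V = {x. \<forall>j<n. (\<forall>l\<le>j. 0 < x (tri j + l)) \<and> (\<Sum>l\<in>{1..j}. x (tri j + l)) < x (tri j)}"
  define F where "F = (\<lambda>x i. if i < N then g x i else (0::real))"
  have encN: "tri j + l < N" if "l \<le> j" "j < n" for j l
  proof -
    have "tri j + l < tri (Suc j)" using that(1) by (rule enc_lt)
    also have "\<dots> \<le> tri n" using that by (intro tri_mono) simp
    finally show ?thesis by (simp add: N_def)
  qed
  have Fenc: "F x (tri j + l) = (\<Sum>m\<le>l. x (tri l + m) * x (tri j + m) * piv M m)" if "l \<le> j" "j < n" for x j l
    using encN[OF that] dec_enc[OF that(1)] by (simp add: F_def g_def)
  have openV: "open V"
  proof -
    have "V = (\<Inter>j\<in>{..<n}. (\<Inter>l\<in>{..j}. {x. 0 < x (tri j + l)}) \<inter> {x. (\<Sum>l\<in>{1..j}. x (tri j + l)) < x (tri j)})"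
      unfolding V_def by auto
    also have "open \<dots>"
      by (intro open_INT open_Int finite_lessThan finite_atMost ballI open_Collect_less continuous_intros cont_coord)
    finally show ?thesis .
  qed
  define x0 :: "nat \<Rightarrow> real" where "x0 k = (if k < N then (if k = tri (decj k) then real n else 1) else 0)" for k
  have x0top: "x0 \<in> topspace (Euclidean_space N)" by (simp add: topspace_Euclidean_space x0_def)
  have x0enc: "x0 (tri j + l) = (if l = 0 then real n else 1)" if "l \<le> j" "j < n" for j l
    using encN[OF that] dec_enc[OF that(1)] by (simp add: x0_def)
  have x0V: "x0 \<in> V"
    unfolding V_def
  proof (intro CollectI allI impI)
    fix j assume j: "j < n"
    have A: "\<forall>l\<le>j. 0 < x0 (tri j + l)" using j n x0enc by auto
    have "(\<Sum>l\<in>{1..j}. x0 (tri j + l)) = (\<Sum>l\<in>{1..j}. 1)" using j x0enc by (intro sum.cong) auto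
    also have "\<dots> < x0 (tri j)" using x0enc[of 0 j] j by simp
    finally show "(\<forall>l\<le>j. 0 < x0 (tri j + l)) \<and> (\<Sum>l\<in>{1..j}. x0 (tri j + l)) < x0 (tri j)" using A by simp
  qed
  show ?thesis
    unfolding tri_choose N_def[symmetric]
  proof (rule interior_from_inj[OF openV, where g = g])
    show "topspace (Euclidean_space N) \<inter> V \<noteq> {}" using x0top x0V by blast
    show "continuous_on UNIV (\<lambda>x. g x i)" for i unfolding g_def by (rule cont_gram)
    show "inj_on (\<lambda>x i. if i < N then g x i else 0) (topspace (Euclidean_space N) \<inter> V)"
    proof (rule inj_onI)
      fix x y assume x: "x \<in> topspace (Euclidean_space N) \<inter> V" and y: "y \<in> topspace (Euclidean_space N) \<inter> V"
        and e: "(\<lambda>i. if i < N then g x i else 0) = (\<lambda>i. if i < N then g y i else 0)"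
      have Fe: "F x = F y" using e by (simp add: F_def)
      have "\<forall>j l. l \<le> j \<and> j < n \<longrightarrow> cM x j l = cM y j l"
      proof (rule chol_full[where p = "piv M"])
        show "\<forall>l<n. piv M l \<noteq> 0" using piv_nz[OF n] by (simp add: M_def)
        show "\<forall>j<n. cM x j j > 0" using x by (simp add: V_def cM_def)
        show "\<forall>j<n. cM y j j > 0" using y by (simp add: V_def cM_def)
        show "\<forall>i j. i \<le> j \<and> j < n \<longrightarrow> (\<Sum>l\<le>i. cM x i l * cM x j l * piv M l) = (\<Sum>l\<le>i. cM y i l * cM y j l * piv M l)"
          using Fe Fenc unfolding cM_def by metis
      qed
      then have xy: "x (tri j + l) = y (tri j + l)" if "l \<le> j" "j < n" for j l
        using that by (simp add: cM_def)
      show "x = y"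
      proof
        fix k show "x k = y k"
        proof (cases "k < N")
          case True
          then obtain j l where "l \<le> j" "j < n" "k = tri j + l" using enc_surj[of k n] by (auto simp: N_def)
          then show ?thesis using xy by simp
        next
          case False
          then show ?thesis using x y by (simp add: topspace_Euclidean_space)
        qed
      qed
    qed
    show "(\<lambda>x i. if i < N then g x i else 0) ` (topspace (Euclidean_space N) \<inter> V) \<subseteq> MV n"
    proof
      fix z assume "z \<in> (\<lambda>x i. if i < N then g x i else 0) ` (topspace (Euclidean_space N) \<inter> V)"
      then obtain x where x: "x \<in> V" and z: "z = F x" by (auto simp: F_def)
      define K where "K i = Z (alpha (cM x) i) M" for i
      have nn: "0 \<le> alpha (cM x) j k" if "j < n" for j k
      proof (rule alpha_nonneg)
        show "\<forall>l\<in>{1..j}. 0 < cM x j l" using x that by (auto simp: V_def cM_def)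
        show "(\<Sum>l\<in>{1..j}. cM x j l) < cM x j 0" using x that by (simp add: V_def cM_def)
      qed
      show "z \<in> MV n"
        unfolding MV_def
      proof (intro CollectI exI[of _ K] conjI allI impI)
        fix i assume "i < n"
        then show "convex_body2 (K i)" unfolding K_def using nn by (intro convex_body_Z) auto
      next
        fix i j assume ij: "i \<le> j \<and> j < n"
        have "mixed_area (K i) (K j) = Bf M (alpha (cM x) i) (alpha (cM x) j)"
          unfolding K_def using nn ij by (intro mixed_Z) auto
        also have "\<dots> = (\<Sum>l\<le>i. cM x i l * cM x j l * piv M l)"
          unfolding M_def using ij by (intro gram) auto
        also have "\<dots> = z (tri j + i)" using Fenc[of i j x] ij by (simp add: z cM_def)
        finally show "z (j * (j + 1) div 2 + i) = mixed_area (K i) (K j)" by (simp add: tri_def)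
      next
        fix k assume "(n + 1) choose 2 \<le> k"
        moreover have "(n + 1) choose 2 = N" unfolding N_def by (rule tri_choose)
        ultimately show "z k = 0" by (simp add: z F_def)
      qed
    qed
  qed
qed


lemma PMV_part:
  assumes n: "2 \<le> n"
  shows "Euclidean_space (n choose 2) interior_of PMV n \<noteq> {}"
proof -
  define N where "N = tri (n - 1)"
  define M where "M = 2 * n"
  define cP :: "(nat \<Rightarrow> real) \<Rightarrow> nat \<Rightarrow> nat \<Rightarrow> real" where
    "cP x j l = (if l < j then x (tri (j - 1) + l) else if l = j then (if j = 0 then real n else 1) else 0)" for x j l
  define g :: "(nat \<Rightarrow> real) \<Rightarrow> nat \<Rightarrow> real" where
    "g x k = (\<Sum>m\<le>decl k. cP x (decl k) m * cP x (Suc (decj k)) m * piv M m)" for x k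
  define V :: "(nat \<Rightarrow> real) set" where
    "V = {x. \<forall>j<n. (\<forall>l<j. 0 < cP x j l) \<and> (\<Sum>l\<in>{1..j}. cP x j l) < cP x j 0}"
  define F where "F = (\<lambda>x i. if i < N then g x i else (0::real))"
  have contP: "continuous_on UNIV (\<lambda>x. cP x j l)" for j l
    by (cases "l < j"; cases "l = j") (simp_all add: cP_def)
  have encN: "tri (j - 1) + l < N" if "l < j" "j < n" for j l
  proof -
    have "tri (j - 1) + l < tri (Suc (j - 1))" using that(1) by (intro enc_lt) simp
    also have "\<dots> \<le> tri (n - 1)" using that by (intro tri_mono) simp
    finally show ?thesis by (simp add: N_def)
  qed
  have Fenc: "F x (tri (j - 1) + l) = (\<Sum>m\<le>l. cP x l m * cP x j m * piv M m)" if "l < j" "j < n" for x j l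
  proof -
    have "l \<le> j - 1" using that by simp
    from dec_enc[OF this] have "decj (tri (j - 1) + l) = j - 1" "decl (tri (j - 1) + l) = l" .
    moreover have "Suc (j - 1) = j" using that by simp
    ultimately show ?thesis using encN[OF that] by (simp add: F_def g_def)
  qed
  have openV: "open V"
  proof -
    have "V = (\<Inter>j\<in>{..<n}. (\<Inter>l\<in>{..<j}. {x. 0 < cP x j l}) \<inter> {x. (\<Sum>l\<in>{1..j}. cP x j l) < cP x j 0})"
      unfolding V_def by auto
    also have "open \<dots>"
      by (intro open_INT open_Int finite_lessThan finite_atMost ballI open_Collect_less continuous_intros contP)
    finally show ?thesis .
  qed
  define x0 :: "nat \<Rightarrow> real" where "x0 k = (if k < N then (if k = tri (decj k) then real n else 1) else 0)" for k
  have x0top: "x0 \<in> topspace (Euclidean_space N)" by (simp add: topspace_Euclidean_space x0_def)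
  have x0enc: "cP x0 j l = (if l = 0 then real n else 1)" if "l \<le> j" "j < n" for j l
  proof (cases "l < j")
    case True
    then have "l \<le> j - 1" by simp
    from dec_enc[OF this] show ?thesis using encN[OF True that(2)] True by (simp add: x0_def cP_def)
  next
    case False
    then show ?thesis using that by (simp add: cP_def)
  qed
  have x0V: "x0 \<in> V"
    unfolding V_def
  proof (intro CollectI allI impI)
    fix j assume j: "j < n"
    have A: "\<forall>l<j. 0 < cP x0 j l" using j n x0enc by auto
    have "(\<Sum>l\<in>{1..j}. cP x0 j l) = (\<Sum>l\<in>{1..j}. 1)" using j x0enc by (intro sum.cong) auto
    also have "\<dots> < cP x0 j 0" using x0enc[of 0 j] j by simp
    finally show "(\<forall>l<j. 0 < cP x0 j l) \<and> (\<Sum>l\<in>{1..j}. cP x0 j l) < cP x0 j 0" using A by simp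
  qed
  have choose: "n choose 2 = N" unfolding N_def using n by (intro tri_choose') simp
  show ?thesis
    unfolding choose
  proof (rule interior_from_inj[OF openV, where g = g])
    show "topspace (Euclidean_space N) \<inter> V \<noteq> {}" using x0top x0V by blast
    show "continuous_on UNIV (\<lambda>x. g x i)" for i unfolding g_def by (intro continuous_intros contP)
    show "inj_on (\<lambda>x i. if i < N then g x i else 0) (topspace (Euclidean_space N) \<inter> V)"
    proof (rule inj_onI)
      fix x y assume x: "x \<in> topspace (Euclidean_space N) \<inter> V" and y: "y \<in> topspace (Euclidean_space N) \<inter> V"
        and e: "(\<lambda>i. if i < N then g x i else 0) = (\<lambda>i. if i < N then g y i else 0)"
      have Fe: "F x = F y" using e by (simp add: F_def)
      have "\<forall>j l. l \<le> j \<and> j < n \<longrightarrow> cP x j l = cP y j l"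
      proof (rule chol_off[where p = "piv M"])
        show "\<forall>l<n. piv M l \<noteq> 0" using piv_nz[OF n] by (simp add: M_def)
        show "\<forall>j<n. cP x j j = cP y j j \<and> cP x j j \<noteq> 0" using n by (simp add: cP_def)
        show "\<forall>i j. i < j \<and> j < n \<longrightarrow> (\<Sum>l\<le>i. cP x i l * cP x j l * piv M l) = (\<Sum>l\<le>i. cP y i l * cP y j l * piv M l)"
          using Fe Fenc by metis
      qed
      then have xy: "x (tri (j - 1) + l) = y (tri (j - 1) + l)" if "l < j" "j < n" for j l
      proof -
        assume H: "\<forall>j l. l \<le> j \<and> j < n \<longrightarrow> cP x j l = cP y j l"
        have "cP x j l = cP y j l" using H that by simp
        then show ?thesis using that by (simp add: cP_def)
      qed
      show "x = y"
      proof
        fix k show "x k = y k"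
        proof (cases "k < N")
          case True
          then obtain j l where jl: "l \<le> j" "j < n - 1" "k = tri j + l" using enc_surj[of k "n - 1"] by (auto simp: N_def)
          then have "l < Suc j" "Suc j < n" "k = tri (Suc j - 1) + l" by auto
          then show ?thesis using xy by metis
        next
          case False
          then show ?thesis using x y by (simp add: topspace_Euclidean_space)
        qed
      qed
    qed
    show "(\<lambda>x i. if i < N then g x i else 0) ` (topspace (Euclidean_space N) \<inter> V) \<subseteq> PMV n"
    proof
      fix z assume "z \<in> (\<lambda>x i. if i < N then g x i else 0) ` (topspace (Euclidean_space N) \<inter> V)"
      then obtain x where x: "x \<in> V" and z: "z = F x" by (auto simp: F_def)
      define K where "K i = Z (alpha (cP x) i) M" for i
      have nn: "0 \<le> alpha (cP x) j k" if "j < n" for j k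
      proof (rule alpha_nonneg)
        show "\<forall>l\<in>{1..j}. 0 < cP x j l"
        proof
          fix l assume l: "l \<in> {1..j}"
          show "0 < cP x j l"
          proof (cases "l < j")
            case True then show ?thesis using x that by (auto simp: V_def)
          next
            case False then show ?thesis using l by (simp add: cP_def)
          qed
        qed
        show "(\<Sum>l\<in>{1..j}. cP x j l) < cP x j 0" using x that by (simp add: V_def)
      qed
      show "z \<in> PMV n"
        unfolding PMV_def
      proof (intro CollectI exI[of _ K] conjI allI impI)
        fix i assume "i < n"
        then show "convex_body2 (K i)" unfolding K_def using nn by (intro convex_body_Z) auto
      next
        fix i j assume ij: "i < j \<and> j < n"
        have "mixed_area (K i) (K j) = Bf M (alpha (cP x) i) (alpha (cP x) j)"
          unfolding K_def using nn ij by (intro mixed_Z) auto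
        also have "\<dots> = (\<Sum>l\<le>i. cP x i l * cP x j l * piv M l)"
          unfolding M_def using ij by (intro gram) auto
        also have "\<dots> = z (tri (j - 1) + i)" using Fenc[of i j x] ij by (simp add: z)
        also have "tri (j - 1) = j * (j - 1) div 2" using ij by (cases j) (auto simp: tri_def mult.commute)
        finally show "z (j * (j - 1) div 2 + i) = mixed_area (K i) (K j)" by simp
      next
        fix k assume "n choose 2 \<le> k"
        then show "z k = 0" unfolding choose by (simp add: z F_def)
      qed
    qed
  qed
qed

theorem mainTheorem17:
  fixes n :: nat
  assumes "n \<ge> 2"
  shows "Euclidean_space ((n + 1) choose 2) interior_of MV n \<noteq> {} \<and>
         Euclidean_space (n choose 2) interior_of PMV n \<noteq> {}"
  using MV_part[OF assms] PMV_part[OF assms] by simp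


end
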